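(* Let $k,l\ge1$ and $1\le r\le 2k(2l+1)$. Let $\overline{\mathcal{B}}(2k,2l+1;r)$ be the subset of $\mathcal{B}(2k,2l+1;r)$ consisting of boards whose board partition $(\lambda_1,\lambda_2,\lambda_3,\lambda_4,\delta_1,\delta_2)$ satisfies: (i) $\lambda_1\ge\lambda_i$ for all $i>1$; (ii) if $\lambda_1=\lambda_2$ then $\lambda_3\ge\lambda_4$; (iii) if $\lambda_1=\lambda_3$ then $\lambda_2\ge\lambda_4$, and if in addition $\lambda_2=\lambda_4$ then $\delta_1\ge\delta_2$; (iv) if $\lambda_1=\lambda_4$ then $\lambda_2\ge\lambda_3$, and if in addition $\lambda_2=\lambda_3$ then $\delta_1\ge\delta_2$. Then: (1) $\overline{\mathcal{B}}(2k,2l+1;r)$ is a disjoint union of sets each consisting of all boards in $\mathcal{B}(2k,2l+1;r)$ with some fixed board partition; (2) every board of $\mathcal{B}(2k,2l+1;r)$ is equivalent under $\langle H,V\rangle$ to some board of $\overline{\mathcal{B}}(2k,2l+1;r)$; (3) if two boards of $\overline{\mathcal{B}}(2k,2l+1;r)$ are equivalent under $\langle H,V\rangle$, they have the same board partition.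
   Context: A $2k\times(2l+1)$ grid ($2k$ rows numbered top to bottom, $2l+1$ columns numbered left to right); $\mathcal{B}(2k,2l+1;r)$ is the set of boards, i.e. subsets of exactly $r$ blocked cells. The symmetry group is $\langle H,V\rangle=\{R_0,H,V,R_{180}\}$ ($H$: reflection across the horizontal midline; $V$: across the vertical midline; $R_{180}$: 180-degree rotation); boards are equivalent if some element maps one to the other. The grid is divided into six regions: $\Lambda_1$ = rows $1..k$, cols $1..l$; $\Lambda_2$ = rows $1..k$, cols $l+2..2l+1$; $\Lambda_3$ = rows $k+1..2k$, cols $l+2..2l+1$; $\Lambda_4$ = rows $k+1..2k$, cols $1..l$; $\Delta_1$ = rows $1..k$, col $l+1$; $\Delta_2$ = rows $k+1..2k$, col $l+1$. The board partition $(\lambda_1,\lambda_2,\lambda_3,\lambda_4,\delta_1,\delta_2)$ records the number of blocked cells $\lambda_i$ in $\Lambda_i$ and $\delta_i$ in $\Delta_i$. *)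

theory Defs
  imports Main "HOL-Library.Disjoint_Sets"
begin

text \<open>Cells are pairs (row, column), rows 1..2k (top to bottom), columns 1..2l+1
  (left to right).\<close>

type_synonym cell = "nat \<times> nat"

definition grid :: "nat \<Rightarrow> nat \<Rightarrow> cell set" where
  "grid k l = {1..2*k} \<times> {1..2*l+1}"

definition boards :: "nat \<Rightarrow> nat \<Rightarrow> nat \<Rightarrow> cell set set" where
  "boards k l r = {b. b \<subseteq> grid k l \<and> card b = r}"

definition reflH :: "nat \<Rightarrow> nat \<Rightarrow> cell \<Rightarrow> cell" where
  "reflH k l = (\<lambda>(i, j). (2*k + 1 - i, j))"

definition reflV :: "nat \<Rightarrow> nat \<Rightarrow> cell \<Rightarrow> cell" where
  "reflV k l = (\<lambda>(i, j). (i, 2*l + 2 - j))"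

definition rot180 :: "nat \<Rightarrow> nat \<Rightarrow> cell \<Rightarrow> cell" where
  "rot180 k l = (\<lambda>(i, j). (2*k + 1 - i, 2*l + 2 - j))"

definition symgroup :: "nat \<Rightarrow> nat \<Rightarrow> (cell \<Rightarrow> cell) set" where
  "symgroup k l = {id, reflH k l, reflV k l, rot180 k l}"

definition equivalent :: "nat \<Rightarrow> nat \<Rightarrow> cell set \<Rightarrow> cell set \<Rightarrow> bool" where
  "equivalent k l b b' \<longleftrightarrow> (\<exists>g\<in>symgroup k l. g ` b = b')"

definition Lambda1 :: "nat \<Rightarrow> nat \<Rightarrow> cell set" where
  "Lambda1 k l = {1..k} \<times> {1..l}"
definition Lambda2 :: "nat \<Rightarrow> nat \<Rightarrow> cell set" where
  "Lambda2 k l = {1..k} \<times> {l+2..2*l+1}"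
definition Lambda3 :: "nat \<Rightarrow> nat \<Rightarrow> cell set" where
  "Lambda3 k l = {k+1..2*k} \<times> {l+2..2*l+1}"
definition Lambda4 :: "nat \<Rightarrow> nat \<Rightarrow> cell set" where
  "Lambda4 k l = {k+1..2*k} \<times> {1..l}"
definition Delta1 :: "nat \<Rightarrow> nat \<Rightarrow> cell set" where
  "Delta1 k l = {1..k} \<times> {l+1}"
definition Delta2 :: "nat \<Rightarrow> nat \<Rightarrow> cell set" where
  "Delta2 k l = {k+1..2*k} \<times> {l+1}"

type_synonym bpart = "nat \<times> nat \<times> nat \<times> nat \<times> nat \<times> nat"

definition board_partition :: "nat \<Rightarrow> nat \<Rightarrow> cell set \<Rightarrow> bpart" where
  "board_partition k l b =
     (card (b \<inter> Lambda1 k l), card (b \<inter> Lambda2 k l), card (b \<inter> Lambda3 k l),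
      card (b \<inter> Lambda4 k l), card (b \<inter> Delta1 k l), card (b \<inter> Delta2 k l))"

definition good_partition :: "bpart \<Rightarrow> bool" where
  "good_partition p = (case p of (l1, l2, l3, l4, d1, d2) \<Rightarrow>
      (l1 \<ge> l2 \<and> l1 \<ge> l3 \<and> l1 \<ge> l4)
    \<and> (l1 = l2 \<longrightarrow> l3 \<ge> l4)
    \<and> (l1 = l3 \<longrightarrow> l2 \<ge> l4 \<and> (l2 = l4 \<longrightarrow> d1 \<ge> d2))
    \<and> (l1 = l4 \<longrightarrow> l2 \<ge> l3 \<and> (l2 = l3 \<longrightarrow> d1 \<ge> d2)))"

definition boards_bar :: "nat \<Rightarrow> nat \<Rightarrow> nat \<Rightarrow> cell set set" where
  "boards_bar k l r = {b \<in> boards k l r. good_partition (board_partition k l b)}"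

definition partition_class :: "nat \<Rightarrow> nat \<Rightarrow> nat \<Rightarrow> bpart \<Rightarrow> cell set set" where
  "partition_class k l r p = {b \<in> boards k l r. board_partition k l b = p}"

end

theory Submission
  imports Defs
begin

lemma arith2: "good_partition (a,b,c,d,e,f) \<or> good_partition (d,c,b,a,f,e) \<or> good_partition (b,a,d,c,e,f) \<or> good_partition (c,d,a,b,f,e)"
  unfolding good_partition_def prod.case prod.inject by presburger
lemma arithH: "good_partition (a,b,c,d,e,f) \<Longrightarrow> good_partition (d,c,b,a,f,e) \<Longrightarrow> (a,b,c,d,e,f) = (d,c,b,a,f,e)"
  unfolding good_partition_def prod.case prod.inject by presburger
lemma arithV: "good_partition (a,b,c,d,e,f) \<Longrightarrow> good_partition (b,a,d,c,e,f) \<Longrightarrow> (a,b,c,d,e,f) = (b,a,d,c,e,f)"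
  unfolding good_partition_def prod.case prod.inject by presburger
lemma arithR: "good_partition (a,b,c,d,e,f) \<Longrightarrow> good_partition (c,d,a,b,f,e) \<Longrightarrow> (a,b,c,d,e,f) = (c,d,a,b,f,e)"
  unfolding good_partition_def prod.case prod.inject by presburger
lemma card_trans:
  assumes "inj_on g G" "b \<subseteq> G" "\<And>x. x \<in> G \<Longrightarrow> g x \<in> A \<longleftrightarrow> x \<in> B"
  shows "card (g ` b \<inter> A) = card (b \<inter> B)"
proof -
  have "g ` b \<inter> A = g ` (b \<inter> B)"
  proof (rule set_eqI)
    fix y
    show "y \<in> g ` b \<inter> A \<longleftrightarrow> y \<in> g ` (b \<inter> B)"
    proof
      assume "y \<in> g ` b \<inter> A"
      then obtain x where x: "x \<in> b" "y = g x" "g x \<in> A" by blast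
      then have "x \<in> B" using assms(2,3) by blast
      then show "y \<in> g ` (b \<inter> B)" using x by blast
    next
      assume "y \<in> g ` (b \<inter> B)"
      then obtain x where x: "x \<in> b" "y = g x" "x \<in> B" by blast
      then have "g x \<in> A" using assms(2,3) by blast
      then show "y \<in> g ` b \<inter> A" using x by blast
    qed
  qed
  moreover have "inj_on g (b \<inter> B)" using assms(1,2) inj_on_subset[of g G "b \<inter> B"] by blast
  ultimately show ?thesis by (simp add: card_image)
qed
lemma injH: "inj_on (reflH k l) (grid k l)" unfolding inj_on_def reflH_def grid_def by auto
lemma injV: "inj_on (reflV k l) (grid k l)" unfolding inj_on_def reflV_def grid_def by auto
lemma injR: "inj_on (rot180 k l) (grid k l)" unfolding inj_on_def rot180_def grid_def by auto
lemma gridH: "x \<in> grid k l \<Longrightarrow> reflH k l x \<in> grid k l" unfolding reflH_def grid_def by auto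
lemma gridV: "x \<in> grid k l \<Longrightarrow> reflV k l x \<in> grid k l" unfolding reflV_def grid_def by auto
lemma gridR: "x \<in> grid k l \<Longrightarrow> rot180 k l x \<in> grid k l" unfolding rot180_def grid_def by auto
lemmas defs = grid_def Lambda1_def Lambda2_def Lambda3_def Lambda4_def Delta1_def Delta2_def

lemma ptH: assumes "x \<in> grid k l" shows
 "reflH k l x \<in> Lambda1 k l \<longleftrightarrow> x \<in> Lambda4 k l"
 "reflH k l x \<in> Lambda2 k l \<longleftrightarrow> x \<in> Lambda3 k l"
 "reflH k l x \<in> Lambda3 k l \<longleftrightarrow> x \<in> Lambda2 k l"
 "reflH k l x \<in> Lambda4 k l \<longleftrightarrow> x \<in> Lambda1 k l"
 "reflH k l x \<in> Delta1 k l \<longleftrightarrow> x \<in> Delta2 k l"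
 "reflH k l x \<in> Delta2 k l \<longleftrightarrow> x \<in> Delta1 k l"
  using assms by (cases x; auto simp: defs reflH_def)+

lemma bpH: assumes "b \<subseteq> grid k l" shows "board_partition k l (reflH k l ` b) =
  (card (b \<inter> Lambda4 k l), card (b \<inter> Lambda3 k l), card (b \<inter> Lambda2 k l),
   card (b \<inter> Lambda1 k l), card (b \<inter> Delta2 k l), card (b \<inter> Delta1 k l))"
  unfolding board_partition_def
  by (simp only: card_trans[OF injH assms ptH(1)] card_trans[OF injH assms ptH(2)]
    card_trans[OF injH assms ptH(3)] card_trans[OF injH assms ptH(4)]
    card_trans[OF injH assms ptH(5)] card_trans[OF injH assms ptH(6)])

lemma bdH: assumes "b \<in> boards k l r" shows "reflH k l ` b \<in> boards k l r"
proof -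
  have s: "b \<subseteq> grid k l" "card b = r" using assms by (auto simp: boards_def)
  have "inj_on (reflH k l) b" using inj_on_subset[OF injH s(1)] .
  then have "card (reflH k l ` b) = r" using s(2) by (simp add: card_image)
  moreover have "reflH k l ` b \<subseteq> grid k l" using s(1) gridH by blast
  ultimately show ?thesis by (simp add: boards_def)
qed
lemma ptV: assumes "x \<in> grid k l" shows
 "reflV k l x \<in> Lambda1 k l \<longleftrightarrow> x \<in> Lambda2 k l"
 "reflV k l x \<in> Lambda2 k l \<longleftrightarrow> x \<in> Lambda1 k l"
 "reflV k l x \<in> Lambda3 k l \<longleftrightarrow> x \<in> Lambda4 k l"
 "reflV k l x \<in> Lambda4 k l \<longleftrightarrow> x \<in> Lambda3 k l"
 "reflV k l x \<in> Delta1 k l \<longleftrightarrow> x \<in> Delta1 k l"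
 "reflV k l x \<in> Delta2 k l \<longleftrightarrow> x \<in> Delta2 k l"
  using assms by (cases x; auto simp: defs reflV_def)+

lemma bpV: assumes "b \<subseteq> grid k l" shows "board_partition k l (reflV k l ` b) =
  (card (b \<inter> Lambda2 k l), card (b \<inter> Lambda1 k l), card (b \<inter> Lambda4 k l),
   card (b \<inter> Lambda3 k l), card (b \<inter> Delta1 k l), card (b \<inter> Delta2 k l))"
  unfolding board_partition_def
  by (simp only: card_trans[OF injV assms ptV(1)] card_trans[OF injV assms ptV(2)]
    card_trans[OF injV assms ptV(3)] card_trans[OF injV assms ptV(4)]
    card_trans[OF injV assms ptV(5)] card_trans[OF injV assms ptV(6)])

lemma bdV: assumes "b \<in> boards k l r" shows "reflV k l ` b \<in> boards k l r"
proof -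
  have s: "b \<subseteq> grid k l" "card b = r" using assms by (auto simp: boards_def)
  have "inj_on (reflV k l) b" using inj_on_subset[OF injV s(1)] .
  then have "card (reflV k l ` b) = r" using s(2) by (simp add: card_image)
  moreover have "reflV k l ` b \<subseteq> grid k l" using s(1) gridV by blast
  ultimately show ?thesis by (simp add: boards_def)
qed
lemma ptR: assumes "x \<in> grid k l" shows
 "rot180 k l x \<in> Lambda1 k l \<longleftrightarrow> x \<in> Lambda3 k l"
 "rot180 k l x \<in> Lambda2 k l \<longleftrightarrow> x \<in> Lambda4 k l"
 "rot180 k l x \<in> Lambda3 k l \<longleftrightarrow> x \<in> Lambda1 k l"
 "rot180 k l x \<in> Lambda4 k l \<longleftrightarrow> x \<in> Lambda2 k l"
 "rot180 k l x \<in> Delta1 k l \<longleftrightarrow> x \<in> Delta2 k l"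
 "rot180 k l x \<in> Delta2 k l \<longleftrightarrow> x \<in> Delta1 k l"
  using assms by (cases x; auto simp: defs rot180_def)+

lemma bpR: assumes "b \<subseteq> grid k l" shows "board_partition k l (rot180 k l ` b) =
  (card (b \<inter> Lambda3 k l), card (b \<inter> Lambda4 k l), card (b \<inter> Lambda1 k l),
   card (b \<inter> Lambda2 k l), card (b \<inter> Delta2 k l), card (b \<inter> Delta1 k l))"
  unfolding board_partition_def
  by (simp only: card_trans[OF injR assms ptR(1)] card_trans[OF injR assms ptR(2)]
    card_trans[OF injR assms ptR(3)] card_trans[OF injR assms ptR(4)]
    card_trans[OF injR assms ptR(5)] card_trans[OF injR assms ptR(6)])

lemma bdR: assumes "b \<in> boards k l r" shows "rot180 k l ` b \<in> boards k l r"
proof -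
  have s: "b \<subseteq> grid k l" "card b = r" using assms by (auto simp: boards_def)
  have "inj_on (rot180 k l) b" using inj_on_subset[OF injR s(1)] .
  then have "card (rot180 k l ` b) = r" using s(2) by (simp add: card_image)
  moreover have "rot180 k l ` b \<subseteq> grid k l" using s(1) gridR by blast
  ultimately show ?thesis by (simp add: boards_def)
qed

theorem theorem4p9:
  fixes k l r :: nat
  assumes "k \<ge> 1" and "l \<ge> 1" and "1 \<le> r" and "r \<le> 2*k*(2*l+1)"
  shows "(\<exists>P. boards_bar k l r = (\<Union>p\<in>P. partition_class k l r p)
              \<and> disjoint_family_on (partition_class k l r) P)
    \<and> (\<forall>b\<in>boards k l r. \<exists>b'\<in>boards_bar k l r. equivalent k l b b')
    \<and> (\<forall>b\<in>boards_bar k l r. \<forall>b'\<in>boards_bar k l r.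
          equivalent k l b b' \<longrightarrow> board_partition k l b = board_partition k l b')"
proof (intro conjI ballI impI)
  show "\<exists>P. boards_bar k l r = (\<Union>p\<in>P. partition_class k l r p)
              \<and> disjoint_family_on (partition_class k l r) P"
  proof (rule exI[of _ "{p. good_partition p}"], rule conjI)
    show "boards_bar k l r = (\<Union>p\<in>{p. good_partition p}. partition_class k l r p)"
      unfolding boards_bar_def partition_class_def by blast
    show "disjoint_family_on (partition_class k l r) {p. good_partition p}"
      unfolding disjoint_family_on_def partition_class_def by blast
  qed
next
  fix b assume b: "b \<in> boards k l r"
  hence s: "b \<subseteq> grid k l" by (simp add: boards_def)
  have eq: "equivalent k l b (g ` b)" if "g \<in> symgroup k l" for g
    using that unfolding equivalent_def by blast
  define a1 where "a1 = card (b \<inter> Lambda1 k l)"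
  define a2 where "a2 = card (b \<inter> Lambda2 k l)"
  define a3 where "a3 = card (b \<inter> Lambda3 k l)"
  define a4 where "a4 = card (b \<inter> Lambda4 k l)"
  define d1 where "d1 = card (b \<inter> Delta1 k l)"
  define d2 where "d2 = card (b \<inter> Delta2 k l)"
  have p: "board_partition k l b = (a1,a2,a3,a4,d1,d2)"
    unfolding board_partition_def a1_def a2_def a3_def a4_def d1_def d2_def ..
  have pH: "board_partition k l (reflH k l ` b) = (a4,a3,a2,a1,d2,d1)"
    unfolding bpH[OF s] a1_def a2_def a3_def a4_def d1_def d2_def ..
  have pV: "board_partition k l (reflV k l ` b) = (a2,a1,a4,a3,d1,d2)"
    unfolding bpV[OF s] a1_def a2_def a3_def a4_def d1_def d2_def ..
  have pR: "board_partition k l (rot180 k l ` b) = (a3,a4,a1,a2,d2,d1)"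
    unfolding bpR[OF s] a1_def a2_def a3_def a4_def d1_def d2_def ..
  have ok: "b' \<in> boards_bar k l r \<and> equivalent k l b b'"
    if "g \<in> symgroup k l" "b' = g ` b" "b' \<in> boards k l r" "good_partition (board_partition k l b')" for g b'
    using that eq unfolding boards_bar_def by blast
  show "\<exists>b'\<in>boards_bar k l r. equivalent k l b b'"
    using arith2[of a1 a2 a3 a4 d1 d2]
  proof (elim disjE)
    assume "good_partition (a1,a2,a3,a4,d1,d2)"
    then show ?thesis using ok[of id b] b p by (auto simp: symgroup_def)
  next
    assume "good_partition (a4,a3,a2,a1,d2,d1)"
    then show ?thesis using ok[of "reflH k l" "reflH k l ` b"] bdH[OF b] pH by (auto simp: symgroup_def)
  next
    assume "good_partition (a2,a1,a4,a3,d1,d2)"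
    then show ?thesis using ok[of "reflV k l" "reflV k l ` b"] bdV[OF b] pV by (auto simp: symgroup_def)
  next
    assume "good_partition (a3,a4,a1,a2,d2,d1)"
    then show ?thesis using ok[of "rot180 k l" "rot180 k l ` b"] bdR[OF b] pR by (auto simp: symgroup_def)
  qed
next
  fix b b' assume b: "b \<in> boards_bar k l r" and b': "b' \<in> boards_bar k l r"
    and e: "equivalent k l b b'"
  have s: "b \<subseteq> grid k l" using b by (simp add: boards_bar_def boards_def)
  have gb: "good_partition (board_partition k l b)" and gb': "good_partition (board_partition k l b')"
    using b b' by (auto simp: boards_bar_def)
  define a1 where "a1 = card (b \<inter> Lambda1 k l)"
  define a2 where "a2 = card (b \<inter> Lambda2 k l)"
  define a3 where "a3 = card (b \<inter> Lambda3 k l)"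
  define a4 where "a4 = card (b \<inter> Lambda4 k l)"
  define d1 where "d1 = card (b \<inter> Delta1 k l)"
  define d2 where "d2 = card (b \<inter> Delta2 k l)"
  have p: "board_partition k l b = (a1,a2,a3,a4,d1,d2)"
    unfolding board_partition_def a1_def a2_def a3_def a4_def d1_def d2_def ..
  have pH: "board_partition k l (reflH k l ` b) = (a4,a3,a2,a1,d2,d1)"
    unfolding bpH[OF s] a1_def a2_def a3_def a4_def d1_def d2_def ..
  have pV: "board_partition k l (reflV k l ` b) = (a2,a1,a4,a3,d1,d2)"
    unfolding bpV[OF s] a1_def a2_def a3_def a4_def d1_def d2_def ..
  have pR: "board_partition k l (rot180 k l ` b) = (a3,a4,a1,a2,d2,d1)"
    unfolding bpR[OF s] a1_def a2_def a3_def a4_def d1_def d2_def ..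
  from e obtain g where g: "g \<in> symgroup k l" "b' = g ` b" by (auto simp: equivalent_def)
  from g(1) consider "g = id" | "g = reflH k l" | "g = reflV k l" | "g = rot180 k l"
    by (auto simp: symgroup_def)
  then show "board_partition k l b = board_partition k l b'"
  proof cases
    case 1 then show ?thesis using g by simp
  next
    case 2
    have bp': "board_partition k l b' = (a4,a3,a2,a1,d2,d1)" using g(2) pH unfolding 2 by simp
    have "good_partition (a4,a3,a2,a1,d2,d1)" using gb' unfolding bp' .
    from arithH[OF gb[unfolded p] this] show ?thesis unfolding p bp' .
  next
    case 3
    have bp': "board_partition k l b' = (a2,a1,a4,a3,d1,d2)" using g(2) pV unfolding 3 by simp
    have "good_partition (a2,a1,a4,a3,d1,d2)" using gb' unfolding bp' .
    from arithV[OF gb[unfolded p] this] show ?thesis unfolding p bp' .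
  next
    case 4
    have bp': "board_partition k l b' = (a3,a4,a1,a2,d2,d1)" using g(2) pR unfolding 4 by simp
    have "good_partition (a3,a4,a1,a2,d2,d1)" using gb' unfolding bp' .
    from arithR[OF gb[unfolded p] this] show ?thesis unfolding p bp' .
  qed
qed

end
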